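(* If a connected graph $G$ has $n\ge 2$ vertices and $k$ blocks, then the graphic TSP cost of $G$ is at least $n+k-1$.
   Context: A block of a graph is a maximal biconnected subgraph (a bridge forms a trivial block). For a connected unweighted undirected graph $G=(V,E)$ with $n\ge 2$ vertices, the graphic TSP cost of $G$ is $\min \sum_{i=1}^{n} d_G(v_i,v_{i+1})$ over all cyclic orderings $(v_1,\dots,v_n)$ of $V$, with $v_{n+1}=v_1$, where $d_G$ is the shortest-path distance in $G$. *)

theory Defs
  imports Main
begin

definition graph :: "'a set \<Rightarrow> ('a \<Rightarrow> 'a \<Rightarrow> bool) \<Rightarrow> bool" where
  "graph V E \<longleftrightarrow> finite V \<and> (\<forall>x y. E x y \<longrightarrow> E y x) \<and> (\<forall>x. \<not> E x x)
     \<and> (\<forall>x y. E x y \<longrightarrow> x \<in> V \<and> y \<in> V)"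

definition connected_on :: "('a \<Rightarrow> 'a \<Rightarrow> bool) \<Rightarrow> 'a set \<Rightarrow> bool" where
  "connected_on E S \<longleftrightarrow> (\<forall>x\<in>S. \<forall>y\<in>S. (\<lambda>a b. E a b \<and> a \<in> S \<and> b \<in> S)\<^sup>*\<^sup>* x y)"

text \<open>Nonseparable (biconnected) vertex set: at least two vertices, the induced
  subgraph is connected and has no cut vertex. (K2, i.e. a bridge, qualifies.)\<close>
definition biconnected_on :: "'a set \<Rightarrow> ('a \<Rightarrow> 'a \<Rightarrow> bool) \<Rightarrow> 'a set \<Rightarrow> bool" where
  "biconnected_on V E B \<longleftrightarrow> B \<subseteq> V \<and> 2 \<le> card B \<and> connected_on E B
     \<and> (\<forall>v\<in>B. connected_on E (B - {v}))"

text \<open>Blocks: maximal biconnected subgraphs (maximal subgraphs of this kind are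
  induced, so they are identified with their vertex sets).\<close>
definition is_block :: "'a set \<Rightarrow> ('a \<Rightarrow> 'a \<Rightarrow> bool) \<Rightarrow> 'a set \<Rightarrow> bool" where
  "is_block V E B \<longleftrightarrow> biconnected_on V E B
     \<and> (\<forall>C. biconnected_on V E C \<and> B \<subseteq> C \<longrightarrow> C = B)"

definition blocks :: "'a set \<Rightarrow> ('a \<Rightarrow> 'a \<Rightarrow> bool) \<Rightarrow> 'a set set" where
  "blocks V E = {B. is_block V E B}"

definition dist :: "('a \<Rightarrow> 'a \<Rightarrow> bool) \<Rightarrow> 'a \<Rightarrow> 'a \<Rightarrow> nat" where
  "dist E u v = (LEAST n. (E ^^ n) u v)"

definition tour_cost :: "('a \<Rightarrow> 'a \<Rightarrow> bool) \<Rightarrow> 'a list \<Rightarrow> nat" where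
  "tour_cost E xs = (\<Sum>i<length xs. dist E (xs ! i) (xs ! ((i + 1) mod length xs)))"

definition tsp_cost :: "'a set \<Rightarrow> ('a \<Rightarrow> 'a \<Rightarrow> bool) \<Rightarrow> nat" where
  "tsp_cost V E = Min {tour_cost E xs | xs. distinct xs \<and> set xs = V}"

end

theory Submission
  imports Defs
begin

lemma chain_rtranclp:
  assumes "i \<le> j" "\<forall>k. i \<le> k \<and> k < j \<longrightarrow> R (f k) (f (Suc k))"
  shows "R\<^sup>*\<^sup>* (f i) (f j)"
  using assms
proof (induction j)
  case 0 then show ?case by simp
next
  case (Suc j)
  show ?case
  proof (cases "i = Suc j")
    case True then show ?thesis by simp
  next
    case False
    then have "R\<^sup>*\<^sup>* (f i) (f j)" using Suc by auto
    moreover have "R (f j) (f (Suc j))" using Suc False by auto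
    ultimately show ?thesis by (meson rtranclp.rtrancl_into_rtrancl)
  qed
qed

lemma relpowp_fun:
  "(R ^^ n) a b \<Longrightarrow> \<exists>f. f 0 = a \<and> f n = b \<and> (\<forall>k<n. R (f k) (f (Suc k)))"
proof (induction n arbitrary: b)
  case 0 then show ?case by (auto intro: exI[of _ "\<lambda>_. a"])
next
  case (Suc n)
  from Suc.prems obtain c where c: "(R ^^ n) a c" "R c b" by (auto elim: relpowp_Suc_E)
  from Suc.IH[OF c(1)] obtain f where f: "f 0 = a" "f n = c" "\<forall>k<n. R (f k) (f (Suc k))" by blast
  show ?case
    apply (rule exI[of _ "f(Suc n := b)"])
    using f c by (auto simp: less_Suc_eq)
qed

definition reach :: "('a \<Rightarrow> 'a \<Rightarrow> bool) \<Rightarrow> 'a set \<Rightarrow> 'a \<Rightarrow> 'a \<Rightarrow> bool" where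
  "reach E S = (\<lambda>a b. E a b \<and> a \<in> S \<and> b \<in> S)\<^sup>*\<^sup>*"

lemma connected_on_reach: "connected_on E S \<longleftrightarrow> (\<forall>x\<in>S. \<forall>y\<in>S. reach E S x y)"
  unfolding connected_on_def reach_def by simp

lemma reach_mono: "S \<subseteq> T \<Longrightarrow> reach E S a b \<Longrightarrow> reach E T a b"
  unfolding reach_def by (erule rtranclp_mono[THEN predicate2D, rotated]) auto

lemma reach_trans: "reach E S a b \<Longrightarrow> reach E S b c \<Longrightarrow> reach E S a c"
  unfolding reach_def by auto

lemma reach_sym:
  assumes "\<forall>x y. E x y \<longrightarrow> E y x" "reach E S a b" shows "reach E S b a"
  using assms(2) unfolding reach_def
proof (induction rule: rtranclp_induct)
  case base then show ?case by simp
next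
  case (step y z)
  then have "(\<lambda>a b. E a b \<and> a \<in> S \<and> b \<in> S) z y" using assms(1) by auto
  from converse_rtranclp_into_rtranclp[OF this step.IH] show ?case .
qed

lemma connected_root:
  assumes "\<forall>x y. E x y \<longrightarrow> E y x" "r \<in> S" "\<forall>z\<in>S. reach E S z r"
  shows "connected_on E S"
  unfolding connected_on_reach
  using assms reach_sym reach_trans by metis

lemma walk_reach:
  assumes "i \<le> j" "\<forall>k. i \<le> k \<and> k < j \<longrightarrow> E (f k) (f (Suc k))"
    "\<forall>k. i \<le> k \<and> k \<le> j \<longrightarrow> f k \<in> S"
  shows "reach E S (f i) (f j)"
  unfolding reach_def
  apply (rule chain_rtranclp)
  using assms by auto

lemma bicon_minus:
  assumes "biconnected_on V E B" "D = {} \<or> (\<exists>v. D = {v})"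
  shows "connected_on E (B - D)"
proof -
  have c: "connected_on E B" using assms(1) unfolding biconnected_on_def by auto
  show ?thesis
  proof (cases "D = {}")
    case True then show ?thesis using c by simp
  next
    case False
    then obtain v where v: "D = {v}" using assms(2) by auto
    show ?thesis
    proof (cases "v \<in> B")
      case True then show ?thesis using assms(1) v unfolding biconnected_on_def by auto
    next
      case False then have "B - D = B" using v by auto
      then show ?thesis using c by simp
    qed
  qed
qed


lemma two_elems: "2 \<le> card B \<Longrightarrow> D = {} \<or> (\<exists>v. D = {v}) \<Longrightarrow> \<exists>r. r \<in> B - D"
proof -
  assume a: "2 \<le> card B" "D = {} \<or> (\<exists>v. D = {v})"
  then have "finite B" by (metis card.infinite not_numeral_le_zero)
  have "\<not> B \<subseteq> D"
  proof
    assume "B \<subseteq> D"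
    then have "card B \<le> card D" using a by (metis card_mono finite.emptyI finite.insertI)
    moreover have "card D \<le> 1" using a(2) by auto
    ultimately show False using a(1) by simp
  qed
  then show ?thesis by auto
qed

lemma block_inter:
  assumes g: "graph V E" and bB: "is_block V E B" and bB': "is_block V E B'"
    and ab: "a \<in> B" "a \<in> B'" "b \<in> B" "b \<in> B'" "a \<noteq> b"
  shows "B = B'"
proof -
  have sym: "\<forall>x y. E x y \<longrightarrow> E y x" using g unfolding graph_def by auto
  have biB: "biconnected_on V E B" and biB': "biconnected_on V E B'"
    using bB bB' unfolding is_block_def by auto
  let ?U = "B \<union> B'"
  have conn: "connected_on E (?U - D)" if D: "D = {} \<or> (\<exists>v. D = {v})" for D
  proof -
    have "\<exists>r. r \<in> (B \<inter> B') - D"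
    proof (cases "D = {}")
      case True then show ?thesis using ab by auto
    next
      case False then obtain v where "D = {v}" using D by auto
      then show ?thesis using ab by (cases "a = v") auto
    qed
    then obtain r where r: "r \<in> B" "r \<in> B'" "r \<notin> D" by auto
    have cB: "connected_on E (B - D)" and cB': "connected_on E (B' - D)"
      using bicon_minus[OF biB D] bicon_minus[OF biB' D] by auto
    show ?thesis
    proof (rule connected_root[OF sym, of r])
      show "r \<in> ?U - D" using r by auto
      show "\<forall>z\<in>?U - D. reach E (?U - D) z r"
      proof
        fix z assume z: "z \<in> ?U - D"
        show "reach E (?U - D) z r"
        proof (cases "z \<in> B")
          case True
          then have "reach E (B - D) z r" using cB r z unfolding connected_on_reach by auto
          then show ?thesis by (rule reach_mono[rotated]) auto
        next
          case False
          then have "reach E (B' - D) z r" using cB' r z unfolding connected_on_reach by auto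
          then show ?thesis by (rule reach_mono[rotated]) auto
        qed
      qed
    qed
  qed
  have "biconnected_on V E ?U"
    unfolding biconnected_on_def
  proof (intro conjI)
    show "?U \<subseteq> V" using biB biB' unfolding biconnected_on_def by auto
    then have "finite ?U" using g unfolding graph_def by (auto intro: finite_subset)
    then have "card B \<le> card ?U" by (simp add: card_mono)
    then show "2 \<le> card ?U" using biB unfolding biconnected_on_def by auto
    show "connected_on E ?U" using conn[of "{}"] by simp
    show "\<forall>v\<in>?U. connected_on E (?U - {v})" using conn by auto
  qed
  then have "?U = B" "?U = B'" using bB bB' unfolding is_block_def by auto
  then show ?thesis by auto
qed


lemma key:
  assumes g: "graph V E" and bB: "is_block V E B"
    and Fdef: "F = (\<lambda>a b. E a b \<and> \<not> (a \<in> B \<and> b \<in> B))"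
    and xy: "F\<^sup>*\<^sup>* x y" "x \<in> B" "y \<in> B" "x \<noteq> y"
  shows False
proof -
  have sym: "\<forall>x y. E x y \<longrightarrow> E y x" and inV: "\<forall>x y. E x y \<longrightarrow> x \<in> V \<and> y \<in> V"
    and finV: "finite V"
    using g unfolding graph_def by auto
  have biB: "biconnected_on V E B" using bB unfolding is_block_def by auto
  have BV: "B \<subseteq> V" and cardB: "2 \<le> card B" using biB unfolding biconnected_on_def by auto
  define Good where "Good n \<longleftrightarrow> (\<exists>f. f 0 \<in> B \<and> f n \<in> B \<and> f 0 \<noteq> f n \<and> (\<forall>k<n. F (f k) (f (Suc k))))" for n
  obtain n0 where "(F ^^ n0) x y" using rtranclp_imp_relpowp[OF xy(1)] by blast
  from relpowp_fun[OF this] have "Good n0" unfolding Good_def using xy by blast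
  define n where "n = (LEAST n. Good n)"
  have "Good n" unfolding n_def by (rule LeastI) fact
  have minim: "\<not> Good m" if "m < n" for m using not_less_Least[of m Good] that n_def by auto
  from \<open>Good n\<close> obtain f where f: "f 0 \<in> B" "f n \<in> B" "f 0 \<noteq> f n" "\<forall>k<n. F (f k) (f (Suc k))"
    unfolding Good_def by blast
  have Ef: "E (f k) (f (Suc k))" if "k < n" for k using f(4) that Fdef by auto
  have n1: "n \<noteq> 0" using f by (metis)
  have n2: "n \<noteq> 1"
  proof
    assume "n = 1" then have "F (f 0) (f 1)" using f(4) by auto
    then show False using f \<open>n = 1\<close> Fdef by auto
  qed
  have int: "f l \<notin> B" if "0 < l" "l < n" for l
  proof
    assume fl: "f l \<in> B"
    show False
    proof (cases "f l = f 0")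
      case False
      then have "Good l" unfolding Good_def using f fl that
        by (intro exI[of _ f]) auto
      then show False using minim that by auto
    next
      case True
      have "Good (n - l)" unfolding Good_def
        apply (intro exI[of _ "\<lambda>k. f (k + l)"])
        using f fl that True by (auto simp: add.commute)
      then show False using minim that by auto
    qed
  qed
  have dist: "f i \<noteq> f j" if "i < j" "j \<le> n" for i j
  proof
    assume eq: "f i = f j"
    define g where "g k = (if k \<le> i then f k else f (k + (j - i)))" for k
    have "Good (n - (j - i))" unfolding Good_def
    proof (intro exI[of _ g] conjI allI impI)
      have ge: "g (n - (j - i)) = f n"
      proof (cases "j = n")
        case True then show ?thesis using that eq unfolding g_def by auto
      next
        case False then show ?thesis using that unfolding g_def by auto
      qed
      show "g 0 \<in> B" "g 0 \<noteq> g (n - (j - i))" "g (n - (j - i)) \<in> B"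
        using f that eq ge unfolding g_def by auto
      fix k assume k: "k < n - (j - i)"
      show "F (g k) (g (Suc k))"
      proof (cases "k < i")
        case True then show ?thesis unfolding g_def using f(4) that k by auto
      next
        case False
        show ?thesis
        proof (cases "k = i")
          case True
          then have "g k = f j" "g (Suc k) = f (Suc j)" unfolding g_def using eq that by auto
          then show ?thesis using f(4) that k True by auto
        next
          case False
          then have "g k = f (k + (j - i))" "g (Suc k) = f (Suc (k + (j - i)))"
            unfolding g_def using \<open>\<not> k < i\<close> by auto
          then show ?thesis using f(4) that k by auto
        qed
      qed
    qed
    then show False using minim that by auto
  qed
  define C where "C = B \<union> {f l | l. 0 < l \<and> l < n}"
  have fV: "f k \<in> V" if "k \<le> n" for k
  proof (cases k)
    case 0 then show ?thesis using f BV by auto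
  next
    case (Suc k') then show ?thesis using Ef[of k'] inV that by auto
  qed
  have fC: "f k \<in> C" if "k \<le> n" for k
    using that f unfolding C_def by (cases "k = 0"; cases "k = n") auto
  have CV: "C \<subseteq> V" unfolding C_def using BV fV by auto
  have conn: "connected_on E (C - D)" if D: "D = {} \<or> (\<exists>v. D = {v})" for D
  proof -
    obtain r where r: "r \<in> B - D" using two_elems[OF cardB D] by blast
    have cB: "connected_on E (B - D)" using bicon_minus[OF biB D] .
    have toB: "reach E (C - D) z r" if "z \<in> B - D" for z
    proof -
      have "reach E (B - D) z r" using cB r that unfolding connected_on_reach by auto
      then show ?thesis by (rule reach_mono[rotated]) (auto simp: C_def)
    qed
    show ?thesis
    proof (rule connected_root[OF sym, of r])
      show "r \<in> C - D" using r C_def by auto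
      show "\<forall>z\<in>C - D. reach E (C - D) z r"
      proof
        fix z assume z: "z \<in> C - D"
        show "reach E (C - D) z r"
        proof (cases "z \<in> B")
          case True then show ?thesis using toB z by auto
        next
          case False
          then obtain l where l: "z = f l" "0 < l" "l < n" using z C_def by auto
          show ?thesis
          proof (cases "\<forall>k\<le>l. f k \<notin> D")
            case True
            have "reach E (C - D) (f 0) (f l)"
              by (rule walk_reach) (use True Ef fC l in auto)
            then have "reach E (C - D) z (f 0)" using reach_sym[OF sym] l by auto
            moreover have "reach E (C - D) (f 0) r" using toB True f by auto
            ultimately show ?thesis by (rule reach_trans)
          next
            case False
            then obtain k where k: "k \<le> l" "f k \<in> D" by auto
            then obtain v where v: "D = {v}" using D by auto
            have "k < l" using k z l v by (metis DiffD2 le_neq_implies_less)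
            have nD: "f k' \<notin> D" if "l \<le> k'" "k' \<le> n" for k'
              using dist[of k k'] that k v \<open>k < l\<close> by auto
            have "reach E (C - D) (f l) (f n)"
              by (rule walk_reach) (use nD Ef fC l in auto)
            moreover have "reach E (C - D) (f n) r" using toB nD f l by auto
            ultimately show ?thesis using l reach_trans by metis
          qed
        qed
      qed
    qed
  qed
  have "biconnected_on V E C"
    unfolding biconnected_on_def
  proof (intro conjI)
    show "C \<subseteq> V" by (fact CV)
    then have "finite C" using finV by (auto intro: finite_subset)
    then have "card B \<le> card C" by (simp add: card_mono C_def)
    then show "2 \<le> card C" using cardB by auto
    show "connected_on E C" using conn[of "{}"] by simp
    show "\<forall>v\<in>C. connected_on E (C - {v})" using conn by auto
  qed
  then have "C = B" using bB unfolding is_block_def C_def by auto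
  moreover have "f 1 \<in> C" "f 1 \<notin> B" using n1 n2 int[of 1] unfolding C_def by auto
  ultimately show False by auto
qed


lemma two_distinct: "2 \<le> card B \<Longrightarrow> \<exists>x y. x \<in> B \<and> y \<in> B \<and> x \<noteq> y"
proof -
  assume a: "2 \<le> card B"
  obtain r where r: "r \<in> B - {}" using two_elems[OF a, of "{}"] by blast
  obtain r' where r': "r' \<in> B - {r}" using two_elems[OF a, of "{r}"] by blast
  show ?thesis using r r' by blast
qed

lemma count_walk:
  assumes g: "graph V E"
    and cl: "W 0 = W C" and Ew: "\<forall>k<C. E (W k) (W (Suc k))"
    and cov: "\<forall>v\<in>V. \<exists>k\<le>C. W k = v" and W0: "W 0 \<in> V"
  shows "card V + card (blocks V E) \<le> C + 1"
proof -
  have irr: "\<forall>x. \<not> E x x" and finV: "finite V" using g unfolding graph_def by auto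
  define R where "R = {j. j < C \<and> (\<exists>i\<le>j. W i = W (Suc j))}"
  define N where "N = {j. j < C \<and> (\<forall>i\<le>j. W i \<noteq> W (Suc j))}"
  have RN: "R \<union> N = {..<C}" "R \<inter> N = {}" unfolding R_def N_def by auto
  have fR: "finite R" "finite N" using RN by (metis finite_Un finite_lessThan)+
  have cardRN: "card R + card N = C"
    using card_Un_disjoint[OF fR RN(2)] RN(1) by simp
  have "V - {W 0} \<subseteq> (\<lambda>j. W (Suc j)) ` N"
  proof
    fix v assume v: "v \<in> V - {W 0}"
    then obtain k where k: "k \<le> C" "W k = v" using cov by auto
    define i0 where "i0 = (LEAST i. W i = v)"
    have wi0: "W i0 = v" unfolding i0_def by (rule LeastI) (rule k(2))
    have "i0 \<le> k" unfolding i0_def by (rule Least_le) (rule k(2))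
    have "i0 \<noteq> 0"
    proof
      assume "i0 = 0" then show False using wi0 v by simp
    qed
    then obtain j where j: "i0 = Suc j" by (cases i0) auto
    have "\<forall>i\<le>j. W i \<noteq> v" using not_less_Least[of _ "\<lambda>i. W i = v"] j unfolding i0_def by auto
    then have "j \<in> N" unfolding N_def using j \<open>i0 \<le> k\<close> k wi0 by auto
    then show "v \<in> (\<lambda>j. W (Suc j)) ` N" using wi0 j by auto
  qed
  then have "card (V - {W 0}) \<le> card N"
    by (meson card_image_le card_mono fR(2) finite_imageI order_trans)
  then have cN: "card V \<le> card N + 1" using W0 finV by (simp add: card_Diff_singleton)
  define S where "S B = {j. j < C \<and> W j \<in> B \<and> W (Suc j) \<in> B}" for B
  define t where "t B = Max (S B)" for B
  have tprop: "t B \<in> S B \<and> t B \<in> R" if bB: "is_block V E B" for B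
  proof -
    define F where "F = (\<lambda>a b. E a b \<and> \<not> (a \<in> B \<and> b \<in> B))"
    have fS: "finite (S B)" unfolding S_def by auto
    have chainF: "F\<^sup>*\<^sup>* (W p) (W q)" if "p \<le> q" "q \<le> C" "\<forall>k. p \<le> k \<and> k < q \<longrightarrow> k \<notin> S B" for p q
      by (rule chain_rtranclp) (use that Ew in \<open>auto simp: F_def S_def\<close>)
    have "S B \<noteq> {}"
    proof
      assume e: "S B = {}"
      have "2 \<le> card B" using bB unfolding is_block_def biconnected_on_def by auto
      then obtain x y where xy: "x \<in> B" "y \<in> B" "x \<noteq> y" using two_distinct by blast
      have "B \<subseteq> V" using bB unfolding is_block_def biconnected_on_def by auto
      then obtain a b where ab: "a \<le> C" "b \<le> C" "W a = x" "W b = y" using cov xy by blast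
      show False
      proof (cases "a \<le> b")
        case True
        then have "F\<^sup>*\<^sup>* (W a) (W b)" using chainF ab e by auto
        then show False using key[OF g bB F_def] xy ab by auto
      next
        case False
        then have "F\<^sup>*\<^sup>* (W b) (W a)" using chainF ab e by auto
        then show False using key[OF g bB F_def, of "W b" "W a"] xy ab by auto
      qed
    qed
    then have tS: "t B \<in> S B" unfolding t_def using fS Max_in by blast
    have tmax: "j \<le> t B" if "j \<in> S B" for j unfolding t_def using fS that by simp
    have "\<exists>s. W s \<in> B" using tS unfolding S_def by auto
    define s where "s = (LEAST s. W s \<in> B)"
    have ws: "W s \<in> B" unfolding s_def using \<open>\<exists>s. W s \<in> B\<close> by (metis LeastI)
    have st: "s \<le> t B" unfolding s_def using tS S_def by (auto intro: Least_le)
    have nb: "W k \<notin> B" if "k < s" for k using not_less_Least[of k "\<lambda>s. W s \<in> B"] that s_def by auto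
    have nS: "\<forall>k. Suc (t B) \<le> k \<and> k < C \<longrightarrow> k \<notin> S B"
      using tmax by (meson not_less_eq_eq)
    have "F\<^sup>*\<^sup>* (W (Suc (t B))) (W C)"
      by (rule chainF) (use tS nS in \<open>auto simp: S_def\<close>)
    moreover have "F\<^sup>*\<^sup>* (W 0) (W s)"
      by (rule chainF) (use st tS nb in \<open>auto simp: S_def\<close>)
    ultimately have "F\<^sup>*\<^sup>* (W (Suc (t B))) (W s)" using cl by auto
    then have "W (Suc (t B)) = W s" using key[OF g bB F_def] ws tS S_def by auto
    then have "t B \<in> R" unfolding R_def using st tS S_def by auto
    then show ?thesis using tS by auto
  qed
  have inj: "inj_on t (blocks V E)"
  proof
    fix B B' assume b: "B \<in> blocks V E" "B' \<in> blocks V E" and eq: "t B = t B'"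
    have bb: "is_block V E B" "is_block V E B'" using b blocks_def by auto
    have "t B \<in> S B" "t B \<in> S B'" using tprop[OF bb(1)] tprop[OF bb(2)] eq by auto
    then have m: "W (t B) \<in> B" "W (t B) \<in> B'" "W (Suc (t B)) \<in> B" "W (Suc (t B)) \<in> B'"
      "t B < C" unfolding S_def by auto
    have "E (W (t B)) (W (Suc (t B)))" using Ew m(5) by blast
    then have "W (t B) \<noteq> W (Suc (t B))" using irr by metis
    then show "B = B'" using block_inter[OF g bb, of "W (t B)" "W (Suc (t B))"] m by simp
  qed
  have "t ` blocks V E \<subseteq> R" using tprop blocks_def by auto
  then have "card (blocks V E) \<le> card R" using card_inj_on_le[OF inj] fR by auto
  then show ?thesis using cN cardRN by linarith
qed


lemma path_exists:
  assumes "connected_on E V" "u \<in> V" "v \<in> V"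
  shows "\<exists>P. P 0 = u \<and> P (dist E u v) = v \<and> (\<forall>k<dist E u v. E (P k) (P (Suc k)))"
proof -
  have "reach E V u v" using assms unfolding connected_on_reach by auto
  then have "E\<^sup>*\<^sup>* u v" unfolding reach_def
    by (rule rtranclp_mono[THEN predicate2D, rotated]) auto
  then have "\<exists>n. (E ^^ n) u v" by (rule rtranclp_imp_relpowp)
  then have "(E ^^ dist E u v) u v" unfolding dist_def by (rule LeastI_ex)
  then show ?thesis by (rule relpowp_fun)
qed

lemma concat_walk:
  assumes c: "connected_on E V"
  shows "ys \<noteq> [] \<Longrightarrow> set ys \<subseteq> V \<Longrightarrow> \<exists>W. W 0 = hd ys
    \<and> W (\<Sum>i<length ys - 1. dist E (ys!i) (ys!Suc i)) = last ys
    \<and> (\<forall>k<(\<Sum>i<length ys - 1. dist E (ys!i) (ys!Suc i)). E (W k) (W (Suc k)))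
    \<and> (\<forall>y\<in>set ys. \<exists>k\<le>(\<Sum>i<length ys - 1. dist E (ys!i) (ys!Suc i)). W k = y)"
proof (induction ys)
  case Nil then show ?case by simp
next
  case (Cons a ys)
  show ?case
  proof (cases "ys = []")
    case True then show ?thesis by (intro exI[of _ "\<lambda>_. a"]) auto
  next
    case False
    define C' where "C' = (\<Sum>i<length ys - 1. dist E (ys!i) (ys!Suc i))"
    obtain W' where W': "W' 0 = hd ys" "W' C' = last ys" "\<forall>k<C'. E (W' k) (W' (Suc k))"
      "\<forall>y\<in>set ys. \<exists>k\<le>C'. W' k = y"
      using Cons False unfolding C'_def by auto
    define d where "d = dist E a (hd ys)"
    have hdV: "hd ys \<in> V" using Cons.prems(2) hd_in_set[OF False] by auto
    have aV: "a \<in> V" using Cons.prems by simp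
    obtain P where P: "P 0 = a" "P d = hd ys" "\<forall>k<d. E (P k) (P (Suc k))"
      using path_exists[OF c aV hdV] unfolding d_def by blast
    have sum: "(\<Sum>i<length (a # ys) - 1. dist E ((a#ys)!i) ((a#ys)!Suc i)) = d + C'"
    proof -
      have l: "length (a # ys) - 1 = Suc (length ys - 1)" using False by simp
      show ?thesis unfolding l sum.lessThan_Suc_shift C'_def d_def
        using False by (simp add: hd_conv_nth)
    qed
    define W where "W k = (if k \<le> d then P k else W' (k - d))" for k
    show ?thesis unfolding sum
    proof (intro exI[of _ W] conjI)
      show "W 0 = hd (a # ys)" using P unfolding W_def by simp
      show "W (d + C') = last (a # ys)"
        using P W' False unfolding W_def by auto
      show "\<forall>k<d + C'. E (W k) (W (Suc k))"
      proof (intro allI impI)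
        fix k assume k: "k < d + C'"
        show "E (W k) (W (Suc k))"
        proof (cases "k < d")
          case True then show ?thesis using P unfolding W_def by auto
        next
          case False
          then have "W k = W' (k - d)" "W (Suc k) = W' (Suc (k - d))"
            using P W' unfolding W_def by (auto simp: Suc_diff_le)
          then show ?thesis using W'(3) k False by auto
        qed
      qed
      show "\<forall>y\<in>set (a # ys). \<exists>k\<le>d + C'. W k = y"
      proof
        fix y assume y: "y \<in> set (a # ys)"
        show "\<exists>k\<le>d + C'. W k = y"
        proof (cases "y = a")
          assume "y = a" then show ?thesis using P unfolding W_def by (intro exI[of _ 0]) auto
        next
          assume "y \<noteq> a"
          then have "y \<in> set ys" using y by simp
          then obtain k where k: "k \<le> C'" "W' k = y" using W' by auto
          show ?thesis
          proof (cases "k = 0")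
            case True then show ?thesis using P W' k unfolding W_def by (intro exI[of _ d]) auto
          next
            case False then show ?thesis using k unfolding W_def by (intro exI[of _ "k + d"]) auto
          qed
        qed
      qed
    qed
  qed
qed


lemma tour_bound:
  assumes g: "graph V E" and c: "connected_on E V" and n2: "card V \<ge> 2"
    and xs: "distinct xs" "set xs = V"
  shows "card V + card (blocks V E) \<le> tour_cost E xs + 1"
proof -
  define n where "n = length xs"
  have nV: "n = card V" using xs distinct_card n_def by metis
  then have "n \<ge> 2" using n2 by simp
  then have "0 < length xs" using n_def by linarith
  then have xs0: "xs ! 0 \<in> V" using xs(2) nth_mem[of 0 xs] by blast
  define ys where "ys = xs @ [xs ! 0]"
  have ys: "ys \<noteq> []" "set ys \<subseteq> V" unfolding ys_def using xs xs0 by auto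
  have lys: "length ys - 1 = n" unfolding ys_def n_def by simp
  have sum: "(\<Sum>i<length ys - 1. dist E (ys!i) (ys!Suc i)) = tour_cost E xs"
    unfolding lys tour_cost_def n_def[symmetric]
  proof (rule sum.cong)
    fix i assume "i \<in> {..<n}"
    then have i: "i < n" by simp
    have a: "ys ! i = xs ! i" unfolding ys_def using i n_def by (simp add: nth_append)
    have b: "ys ! Suc i = xs ! ((i + 1) mod n)"
    proof (cases "Suc i < n")
      case True then show ?thesis unfolding ys_def using n_def by (simp add: nth_append)
    next
      case False then have "Suc i = n" using i by simp
      then show ?thesis unfolding ys_def using n_def by (simp add: nth_append)
    qed
    show "dist E (ys ! i) (ys ! Suc i) = dist E (xs ! i) (xs ! ((i + 1) mod n))" using a b by simp
  qed simp
  obtain W where W: "W 0 = hd ys" "W (tour_cost E xs) = last ys"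
    "\<forall>k<tour_cost E xs. E (W k) (W (Suc k))"
    "\<forall>y\<in>set ys. \<exists>k\<le>tour_cost E xs. W k = y"
    using concat_walk[OF c ys] unfolding sum by blast
  have hl: "hd ys = xs ! 0" "last ys = xs ! 0" unfolding ys_def using \<open>n \<ge> 2\<close> n_def
    by (auto simp: hd_append hd_conv_nth)
  show ?thesis
  proof (rule count_walk[OF g])
    show "W 0 = W (tour_cost E xs)" using W hl by simp
    show "\<forall>k<tour_cost E xs. E (W k) (W (Suc k))" by (fact W(3))
    show "\<forall>v\<in>V. \<exists>k\<le>tour_cost E xs. W k = v" using W(4) xs unfolding ys_def by auto
    show "W 0 \<in> V" using W hl xs0 by simp
  qed
qed

theorem mainTheorem8:
  fixes V :: "'a set" and E :: "'a \<Rightarrow> 'a \<Rightarrow> bool"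
  assumes "graph V E"
    and "connected_on E V"
    and "card V \<ge> 2"
  shows "tsp_cost V E \<ge> card V + card (blocks V E) - 1"
proof -
  have finV: "finite V" using assms(1) unfolding graph_def by auto
  define T where "T = {tour_cost E xs | xs. distinct xs \<and> set xs = V}"
  have "{xs. distinct xs \<and> set xs = V} \<subseteq> {xs. set xs \<subseteq> V \<and> length xs \<le> card V}"
    using distinct_card by fastforce
  then have "finite {xs. distinct xs \<and> set xs = V}"
    using finite_lists_length_le[OF finV] finite_subset by blast
  moreover have "T = tour_cost E ` {xs. distinct xs \<and> set xs = V}" unfolding T_def by auto
  ultimately have finT: "finite T" by simp
  have "T \<noteq> {}" using finite_distinct_list[OF finV] unfolding T_def by auto
  then have "Min T \<in> T" using finT by simp
  then obtain xs where xs: "distinct xs" "set xs = V" "Min T = tour_cost E xs" unfolding T_def by auto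
  have "card V + card (blocks V E) \<le> tour_cost E xs + 1" by (rule tour_bound[OF assms xs(1,2)])
  then show ?thesis unfolding tsp_cost_def T_def[symmetric] using xs(3) by simp
qed

end
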